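(* Let $\alpha\ge0$ and $\epsilon\ge0$, and let $P=\{p_0,p_1,\dots,p_k\}\subset\mathbb R^n$ satisfy $\|p_i-p_j\|\le\epsilon\alpha$ for all $i,j$. Then $$\mathrm{CH}\Big(\bigcup_{0\le i\le k}B(p_i;\alpha)\Big)\subseteq\bigcup_{0\le i\le k}B\Big(p_i;\alpha\sqrt{1+\tfrac{\epsilon^2}{2}}\Big).$$
   Context: $B(p;r)$ denotes the open Euclidean ball of radius $r$ centered at $p$; $\mathrm{CH}$ denotes convex hull. *)

theory Defs
  imports "HOL-Analysis.Analysis"
begin

end

theory Submission
  imports Defs
begin

lemma wsum:
  fixes u b c :: "'b \<Rightarrow> real"
  assumes "sum u Q = 1"
  shows "(\<Sum>y\<in>Q. u y * (a - 2 * b y + c y)) = a - 2 * (\<Sum>y\<in>Q. u y * b y) + (\<Sum>y\<in>Q. u y * c y)"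
proof -
  have "(\<Sum>y\<in>Q. u y * (a - 2 * b y + c y)) = (\<Sum>y\<in>Q. u y * a) - (\<Sum>y\<in>Q. 2 * (u y * b y)) + (\<Sum>y\<in>Q. u y * c y)"
    by (simp add: ring_distribs sum.distrib sum_subtractf mult.left_commute)
  also have "\<dots> = a - 2 * (\<Sum>y\<in>Q. u y * b y) + (\<Sum>y\<in>Q. u y * c y)"
    by (simp add: assms flip: sum_distrib_right sum_distrib_left)
  finally show ?thesis .
qed

lemma key:
  fixes Q :: "'a::euclidean_space set" and x :: 'a
  assumes fin: "finite Q" and u0: "\<forall>y\<in>Q. 0 \<le> u y" and u1: "sum u Q = 1"
    and d: "\<And>a b. a \<in> Q \<Longrightarrow> b \<in> Q \<Longrightarrow> norm (a - b) \<le> D"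
    and D0: "0 \<le> D"
    and xc: "norm (x - sum (\<lambda>y. u y *\<^sub>R y) Q) < r"
  shows "\<exists>y\<in>Q. (norm (x - y))\<^sup>2 < r\<^sup>2 + D\<^sup>2 / 2"
proof (rule ccontr)
  assume neg: "\<not> ?thesis"
  define c where "c = sum (\<lambda>y. u y *\<^sub>R y) Q"
  define A where "A = (\<Sum>y\<in>Q. u y * (y \<bullet> y))"
  have xcc: "\<And>z. (\<Sum>y\<in>Q. u y * (z \<bullet> y)) = z \<bullet> c"
    unfolding c_def by (simp add: inner_sum_right)
  have nsq: "\<And>a b::'a. (norm (a - b))\<^sup>2 = a \<bullet> a - 2 * (a \<bullet> b) + b \<bullet> b"
    by (simp add: power2_norm_eq_inner inner_diff_left inner_diff_right inner_commute)
  have e1: "\<And>z. (\<Sum>y\<in>Q. u y * (norm (z - y))\<^sup>2) = z \<bullet> z - 2 * (z \<bullet> c) + A"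
    unfolding nsq A_def using wsum[OF u1, of "z \<bullet> z" "\<lambda>y. z \<bullet> y" "\<lambda>y. y \<bullet> y" for z] xcc
    by simp
  have e2: "(\<Sum>y\<in>Q. \<Sum>z\<in>Q. u y * u z * (norm (y - z))\<^sup>2) = 2 * A - 2 * (c \<bullet> c)"
  proof -
    have "(\<Sum>y\<in>Q. \<Sum>z\<in>Q. u y * u z * (norm (y - z))\<^sup>2)
        = (\<Sum>y\<in>Q. u y * (\<Sum>z\<in>Q. u z * (norm (y - z))\<^sup>2))"
      by (simp add: sum_distrib_left mult.assoc)
    also have "\<dots> = (\<Sum>y\<in>Q. u y * (A - 2 * (y \<bullet> c) + y \<bullet> y))"
      by (rule sum.cong[OF refl]) (simp add: e1 algebra_simps)
    also have "\<dots> = A - 2 * (\<Sum>y\<in>Q. u y * (y \<bullet> c)) + A"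
      using wsum[OF u1, of A "\<lambda>y. y \<bullet> c" "\<lambda>y. y \<bullet> y"] unfolding A_def by simp
    also have "(\<Sum>y\<in>Q. u y * (y \<bullet> c)) = c \<bullet> c"
      using xcc[of c] by (simp add: inner_commute)
    finally show ?thesis by simp
  qed
  have "(\<Sum>y\<in>Q. \<Sum>z\<in>Q. u y * u z * (norm (y - z))\<^sup>2) \<le> (\<Sum>y\<in>Q. \<Sum>z\<in>Q. u y * u z * D\<^sup>2)"
    apply (intro sum_mono mult_left_mono)
    using d u0 norm_ge_zero by (auto intro!: power_mono)
  also have "\<dots> = D\<^sup>2"
  proof -
    have "(\<Sum>y\<in>Q. \<Sum>z\<in>Q. u y * u z * D\<^sup>2) = (\<Sum>y\<in>Q. u y * ((\<Sum>z\<in>Q. u z) * D\<^sup>2))"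
      by (simp add: sum_distrib_left sum_distrib_right mult.assoc)
    also have "\<dots> = D\<^sup>2" using u1 by (simp flip: sum_distrib_right)
    finally show ?thesis .
  qed
  finally have AD: "A - c \<bullet> c \<le> D\<^sup>2 / 2" using e2 by simp
  have "(\<Sum>y\<in>Q. u y * (r\<^sup>2 + D\<^sup>2 / 2)) \<le> (\<Sum>y\<in>Q. u y * (norm (x - y))\<^sup>2)"
    using neg u0 by (auto intro!: sum_mono mult_left_mono simp: not_less)
  moreover have "(\<Sum>y\<in>Q. u y * (r\<^sup>2 + D\<^sup>2 / 2)) = r\<^sup>2 + D\<^sup>2 / 2"
    using u1 by (simp flip: sum_distrib_right)
  ultimately have "r\<^sup>2 + D\<^sup>2 / 2 \<le> x \<bullet> x - 2 * (x \<bullet> c) + A"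
    using e1[of x] by simp
  moreover have "(norm (x - c))\<^sup>2 = x \<bullet> x - 2 * (x \<bullet> c) + c \<bullet> c" by (rule nsq)
  moreover have "(norm (x - c))\<^sup>2 < r\<^sup>2"
    using xc unfolding c_def by (intro power_strict_mono) auto
  ultimately show False using AD by linarith
qed

theorem proposition25:
  fixes p :: "nat \<Rightarrow> 'a::euclidean_space"
    and k :: nat and \<alpha> \<epsilon> :: real
  assumes "\<alpha> \<ge> 0" and "\<epsilon> \<ge> 0"
    and "\<And>i j. i \<le> k \<Longrightarrow> j \<le> k \<Longrightarrow> norm (p i - p j) \<le> \<epsilon> * \<alpha>"
  shows "convex hull (\<Union>i\<in>{0..k}. ball (p i) \<alpha>)
           \<subseteq> (\<Union>i\<in>{0..k}. ball (p i) (\<alpha> * sqrt (1 + \<epsilon>\<^sup>2 / 2)))"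
proof -
  define Q where "Q = p ` {0..k}"
  define T where "T = (\<Union>c\<in>convex hull Q. \<Union>v\<in>ball 0 \<alpha>. {c + v})"
  have cT: "convex T" unfolding T_def by (intro convex_sums convex_convex_hull convex_ball)
  have sub: "(\<Union>i\<in>{0..k}. ball (p i) \<alpha>) \<subseteq> T"
  proof
    fix y assume "y \<in> (\<Union>i\<in>{0..k}. ball (p i) \<alpha>)"
    then obtain i where i: "i \<le> k" "y \<in> ball (p i) \<alpha>" by auto
    have c: "p i \<in> convex hull Q" unfolding Q_def using i by (intro hull_inc) auto
    have v: "y - p i \<in> ball 0 \<alpha>" using i by (simp add: dist_norm norm_minus_commute)
    show "y \<in> T" unfolding T_def
      by (rule UN_I[OF c], rule UN_I[OF v]) simp
  qed
  have "convex hull (\<Union>i\<in>{0..k}. ball (p i) \<alpha>) \<subseteq> T"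
    by (rule hull_minimal[where S=convex, OF sub cT])
  moreover have "T \<subseteq> (\<Union>i\<in>{0..k}. ball (p i) (\<alpha> * sqrt (1 + \<epsilon>\<^sup>2 / 2)))"
  proof
    fix x assume "x \<in> T"
    then obtain c v where cv: "c \<in> convex hull Q" "v \<in> ball 0 \<alpha>" "x = c + v"
    proof -
      have "\<exists>c\<in>convex hull Q. \<exists>v\<in>ball 0 \<alpha>. x = c + v" using \<open>x \<in> T\<close> by (simp add: T_def)
      then show ?thesis using that by blast
    qed
    have fin: "finite Q" unfolding Q_def by simp
    obtain u where u: "\<forall>y\<in>Q. 0 \<le> u y" "sum u Q = 1" "sum (\<lambda>y. u y *\<^sub>R y) Q = c"
      using cv(1) unfolding convex_hull_finite[OF fin] mem_Collect_eq by blast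
    have "\<exists>y\<in>Q. (norm (x - y))\<^sup>2 < \<alpha>\<^sup>2 + (\<epsilon> * \<alpha>)\<^sup>2 / 2"
    proof (rule key[OF fin u(1) u(2)])
      show "\<And>a b. a \<in> Q \<Longrightarrow> b \<in> Q \<Longrightarrow> norm (a - b) \<le> \<epsilon> * \<alpha>"
        using assms(3) unfolding Q_def by auto
      show "0 \<le> \<epsilon> * \<alpha>" using assms(1,2) by simp
      show "norm (x - (\<Sum>y\<in>Q. u y *\<^sub>R y)) < \<alpha>"
        using cv u(3) by simp
    qed
    then obtain i where i: "i \<le> k" "(norm (x - p i))\<^sup>2 < \<alpha>\<^sup>2 + (\<epsilon> * \<alpha>)\<^sup>2 / 2"
      unfolding Q_def by auto
    have "(norm (x - p i))\<^sup>2 < (\<alpha> * sqrt (1 + \<epsilon>\<^sup>2 / 2))\<^sup>2"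
    proof -
      have "(\<alpha> * sqrt (1 + \<epsilon>\<^sup>2 / 2))\<^sup>2 = \<alpha>\<^sup>2 * (1 + \<epsilon>\<^sup>2 / 2)"
        by (simp add: power_mult_distrib)
      also have "\<dots> = \<alpha>\<^sup>2 + (\<epsilon> * \<alpha>)\<^sup>2 / 2"
        by (simp add: power_mult_distrib ring_distribs)
      finally have eq: "(\<alpha> * sqrt (1 + \<epsilon>\<^sup>2 / 2))\<^sup>2 = \<alpha>\<^sup>2 + (\<epsilon> * \<alpha>)\<^sup>2 / 2" .
      show ?thesis unfolding eq by (rule i(2))
    qed
    hence "norm (x - p i) < \<alpha> * sqrt (1 + \<epsilon>\<^sup>2 / 2)"
    proof (rule power2_less_imp_less)
      show "0 \<le> \<alpha> * sqrt (1 + \<epsilon>\<^sup>2 / 2)" using assms(1) by simp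
    qed
    show "x \<in> (\<Union>i\<in>{0..k}. ball (p i) (\<alpha> * sqrt (1 + \<epsilon>\<^sup>2 / 2)))"
    proof (rule UN_I)
      show "i \<in> {0..k}" using i(1) by simp
      have "dist (p i) x = norm (x - p i)" by (simp add: dist_norm norm_minus_commute)
      then show "x \<in> ball (p i) (\<alpha> * sqrt (1 + \<epsilon>\<^sup>2 / 2))"
        using \<open>norm (x - p i) < \<alpha> * sqrt (1 + \<epsilon>\<^sup>2 / 2)\<close> by simp
    qed
  qed
  ultimately show ?thesis by (rule order_trans)
qed

end
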